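(* Let $d\in\mathbb{N}$, $r\in\mathbb{N}$ with $r\ge2$, and set $\delta=r^{-7/2}$, $\sigma=\sqrt{\log(1/\delta)}/r$, $\gamma=\sqrt{\tfrac52\log r}$, $R=1+\gamma(2+\sqrt2)\sqrt d\,\sigma$, $b=(R+1)^2/(4\sigma^2)$, with $K_r$ as in the context. Then \[ \left|K_r(x,y)-\frac1{\sqrt{2\pi}\sigma}\exp\!\left(-\frac{(x-y)^2}{2\sigma^2}\right)\right|\le\frac{3\delta}{\sqrt{2\pi}\sigma}\qquad\forall x\in[-1,1],\ \forall y\in[-R,R]. \]
   Context: $s_{b,\delta}$ is a univariate polynomial of degree $\lceil\sqrt{2\theta\log(4/\delta)}\rceil$, $\theta=\lceil\max\{\tfrac12be^2,\log(2/\delta)\}\rceil$, with $|e^{-t}-s_{b,\delta}(t)|\le\delta$ for all $t\in[0,b]$. $K_r(x,y)=\frac1{\sqrt{2\pi}\sigma}s_{b,\delta}^2\!\left(\frac{(x-y)^2}{4\sigma^2}\right)$. $\log$ is the natural logarithm. *)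

theory Defs
  imports "HOL-Analysis.Analysis" "HOL-Computational_Algebra.Polynomial"
begin

definition theta_par :: "real \<Rightarrow> real \<Rightarrow> nat" where
  "theta_par b \<delta> = nat \<lceil>max (b * exp 1 ^ 2 / 2) (ln (2 / \<delta>))\<rceil>"

definition sdeg :: "real \<Rightarrow> real \<Rightarrow> nat" where
  "sdeg b \<delta> = nat \<lceil>sqrt (2 * real (theta_par b \<delta>) * ln (4 / \<delta>))\<rceil>"

definition is_s_poly :: "real \<Rightarrow> real \<Rightarrow> real poly \<Rightarrow> bool" where
  "is_s_poly b \<delta> s \<longleftrightarrow> degree s = sdeg b \<delta> \<and>
     (\<forall>t\<in>{0..b}. \<bar>exp (- t) - poly s t\<bar> \<le> \<delta>)"

definition Kr :: "real poly \<Rightarrow> real \<Rightarrow> real \<Rightarrow> real \<Rightarrow> real" where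
  "Kr s \<sigma> x y = 1 / (sqrt (2 * pi) * \<sigma>) * (poly s ((x - y)^2 / (4 * \<sigma>^2)))^2"

end

theory Submission
  imports Defs
begin

theorem lemma12:
  fixes d r :: nat and s :: "real poly"
    and \<delta> \<sigma> \<gamma> R b :: real
  assumes "r \<ge> 2"
    and "\<delta> = real r powr (-7/2)"
    and "\<sigma> = sqrt (ln (1 / \<delta>)) / real r"
    and "\<gamma> = sqrt (5/2 * ln (real r))"
    and "R = 1 + \<gamma> * (2 + sqrt 2) * sqrt (real d) * \<sigma>"
    and "b = (R + 1)^2 / (4 * \<sigma>^2)"
    and "is_s_poly b \<delta> s"
  shows "\<forall>x\<in>{-1..1}. \<forall>y\<in>{-R..R}.
           \<bar>Kr s \<sigma> x y - 1 / (sqrt (2 * pi) * \<sigma>) * exp (- ((x - y)^2 / (2 * \<sigma>^2)))\<bar>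
             \<le> 3 * \<delta> / (sqrt (2 * pi) * \<sigma>)"
proof (intro ballI)
  fix x y :: real assume x: "x \<in> {-1..1}" and y: "y \<in> {-R..R}"
  have r1: "real r > 1" using assms(1) by simp
  have dpos: "\<delta> > 0" using assms(2) r1 by simp
  have dlt: "\<delta> < 1" unfolding assms(2) using r1
    by (simp add: powr_less_one)
  have "ln (1/\<delta>) > 0" using dpos dlt by simp
  hence sp: "\<sigma> > 0" using assms(3) r1 by simp
  define t where "t = (x - y)^2 / (4 * \<sigma>^2)"
  have t0: "t \<ge> 0" unfolding t_def by simp
  have "\<bar>x - y\<bar> \<le> R + 1" using x y by auto
  hence "(x - y)^2 \<le> (R+1)^2"
    by (metis abs_ge_zero abs_le_square_iff power2_abs power_mono)
  hence tb: "t \<le> b" unfolding t_def assms(6) using sp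
    by (simp add: divide_right_mono)
  have close: "\<bar>exp (- t) - poly s t\<bar> \<le> \<delta>" using assms(7) t0 tb
    unfolding is_s_poly_def by auto
  define p where "p = poly s t"
  define e where "e = exp (- t)"
  have e0: "e > 0" "e \<le> 1" unfolding e_def using t0 by auto
  have eq: "exp (- ((x - y)^2 / (2 * \<sigma>^2))) = e^2"
  proof -
    have "- ((x - y)^2 / (2 * \<sigma>^2)) = - t + - t" unfolding t_def using sp by (simp add: field_simps)
    thus ?thesis unfolding e_def by (simp only: exp_add power2_eq_square)
  qed
  have "\<bar>p^2 - e^2\<bar> = \<bar>p - e\<bar> * \<bar>p + e\<bar>"
    by (simp add: power2_eq_square abs_mult[symmetric] algebra_simps)
  also have "\<dots> \<le> \<delta> * 3"
  proof (rule mult_mono)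
    show "\<bar>p - e\<bar> \<le> \<delta>" using close unfolding p_def e_def by simp
    show "\<bar>p + e\<bar> \<le> 3" using close e0 dlt unfolding p_def e_def by linarith
  qed (use dpos in auto)
  finally have key: "\<bar>p^2 - e^2\<bar> \<le> 3 * \<delta>" by simp
  have pos: "sqrt (2 * pi) * \<sigma> > 0" using sp by simp
  have "\<bar>Kr s \<sigma> x y - 1 / (sqrt (2 * pi) * \<sigma>) * exp (- ((x - y)^2 / (2 * \<sigma>^2)))\<bar>
      = \<bar>p^2 - e^2\<bar> / (sqrt (2 * pi) * \<sigma>)"
    unfolding Kr_def eq p_def t_def using pos
    by (simp add: diff_divide_distrib[symmetric])
  also have "\<dots> \<le> 3 * \<delta> / (sqrt (2 * pi) * \<sigma>)"
    using key pos by (simp add: divide_right_mono)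
  finally show "\<bar>Kr s \<sigma> x y - 1 / (sqrt (2 * pi) * \<sigma>) * exp (- ((x - y)^2 / (2 * \<sigma>^2)))\<bar>
             \<le> 3 * \<delta> / (sqrt (2 * pi) * \<sigma>)" .
qed

end
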